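(* In the setting below, let $F,G:\widehat{A}\to\widehat{A}'$ be $\mathcal{A}_\infty$-morphisms with $F_n=G_n=0$ for $n>2$, and let $H$ be an $\mathcal{A}_\infty$ homotopy between $F$ and $G$ with $H_n=0$ for $n>1$. Define $H\boxtimes\mathrm{id}_{DD}:\widehat{A}\to\mathcal{B}'\otimes_{\mathcal{I}}\widehat{A}'$ by $x\mapsto1\otimes H_1(x)$. Then $H\boxtimes\mathrm{id}_{DD}$ is a homotopy of Type D morphisms between $F\boxtimes\mathrm{id}_{DD}$ and $G\boxtimes\mathrm{id}_{DD}$, i.e. \[ F\boxtimes\mathrm{id}_{DD}-G\boxtimes\mathrm{id}_{DD}=(\mu_2\otimes\mathrm{id})(\mathrm{id}\otimes H\boxtimes\mathrm{id}_{DD})\delta+(\mu_2\otimes\mathrm{id})(\mathrm{id}\otimes\delta')(H\boxtimes\mathrm{id}_{DD})+(\mu_1\otimes|\mathrm{id}|)(H\boxtimes\mathrm{id}_{DD}), \] where $\delta,\delta'$ are the Type D structure maps of $\widehat{A}\boxtimes\widehat{DD}$ and $\widehat{A}'\boxtimes\widehat{DD}$.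
   Context: $\mathcal{I}=\mathbb{Z}e_1\times\cdots\times\mathbb{Z}e_k$; $\mathcal{B},\mathcal{B}'$ differential bigraded algebras over $\mathcal{I}$ (bigraded by intrinsic and homological degree $\deg_h$, degree-$(0,0)$ part $\mathcal{I}$, differential $\mu_1$ of bidegree $(0,1)$, $\mu_1^2=0$, $\mu_1(xy)=(-1)^{\deg_hy}\mu_1(x)y+x\mu_1(y)$, multiplication $\mu_2$). $\widehat{A},\widehat{A}'$ are right dg $\mathcal{B}$-modules (differential $m_1$, resp. $m_1'$, of bidegree $(0,1)$ squaring to zero with $m_1(xb)=(-1)^{\deg_hb}m_1(x)b+x\mu_1(b)$; actions $m_2,m_2'$), free over $\mathbb{Z}$ with bases of homogeneous elements having unique right idempotents. $|\mathrm{id}|$ multiplies by $(-1)^{\deg_h}$. $\widehat{DD}=\mathcal{I}$ is a rank-one Type DD bimodule: $\delta_{DD}(1)=\sum_sa_s\otimes c_s^{op}\in\mathcal{B}\otimes_{\mathcal{I}}(\mathcal{B}')^{op}$ of bidegree $(0,1)$ with $\sum_s(-1)^{\deg_hc_s}\mu_1(a_s)\otimes c_s^{op}+\sum_sa_s\otimes\mu_1(c_s)^{op}+\sum_{s,t}(-1)^{\deg_h(a_t)\deg_h(c_s)}a_sa_t\otimes c_t^{op}c_s^{op}=0$. $\widehat{A}\boxtimes\widehat{DD}$: $\widehat{A}$ with $\delta(x)=1\otimes m_1(x)+\sum_s(-1)^{\deg_h(xa_s)\deg_h(c_s)}c_s\otimes xa_s$ (similarly $\delta'$). An $\mathcal{A}_\infty$-morphism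 $F$ with $F_n=0$, $n>2$: bigrading-preserving $\mathcal{I}$-linear $F_1$ and $F_2:\widehat{A}\otimes_{\mathcal{I}}\mathcal{B}\to\widehat{A}'$ lowering $\deg_h$ by one, with $m_1'F_1=F_1m_1$, $m_1'F_2+m_2'(F_1\otimes\mathrm{id})=F_1m_2-F_2(m_1\otimes|\mathrm{id}|)-F_2(\mathrm{id}\otimes\mu_1)$, $-m_2'(F_2\otimes|\mathrm{id}|)=F_2(m_2\otimes\mathrm{id})-F_2(\mathrm{id}\otimes\mu_2)$. $F\boxtimes\mathrm{id}_{DD}(x)=1\otimes F_1(x)+\sum_s(-1)^{\deg_h(c_s)(1+\deg_hF_2(x\otimes a_s))}c_s\otimes F_2(x\otimes a_s)$. An $\mathcal{A}_\infty$ homotopy $H$ with $H_n=0$ for $n>1$ is an $\mathcal{I}$-linear $H_1:\widehat{A}\to\widehat{A}'$ preserving intrinsic degree and lowering $\deg_h$ by one with $F_1-G_1=m_1'H_1+H_1m_1$ and $F_2-G_2=-m_2'(H_1\otimes|\mathrm{id}|)+H_1m_2$. *)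

theory Defs
  imports Main
begin

definition neg1pow :: "int \<Rightarrow> int" where
  "neg1pow n = (if even n then 1 else -1)"

text \<open>Multiplication of an element of an abelian group by (-1)^h, i.e. the map |id|.\<close>
definition sgnmul :: "int \<Rightarrow> 'x::ab_group_add \<Rightarrow> 'x" where
  "sgnmul h y = (if even h then y else - y)"

fun natsmul :: "nat \<Rightarrow> 'x::monoid_add \<Rightarrow> 'x" where
  "natsmul 0 y = 0"
| "natsmul (Suc n) y = y + natsmul n y"

definition zsmul :: "int \<Rightarrow> 'x::ab_group_add \<Rightarrow> 'x" where
  "zsmul n y = (if 0 \<le> n then natsmul (nat n) y else - natsmul (nat (- n)) y)"

text \<open>A bigrading is a family P q h of subgroups (q = intrinsic, h = homological degree)
  giving a direct sum decomposition.\<close>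
definition bigraded :: "(int \<Rightarrow> int \<Rightarrow> 'x::ab_group_add set) \<Rightarrow> bool" where
  "bigraded P \<longleftrightarrow>
     (\<forall>q h. 0 \<in> P q h \<and> (\<forall>x\<in>P q h. \<forall>y\<in>P q h. x + y \<in> P q h \<and> - x \<in> P q h)) \<and>
     (\<forall>x. \<exists>D f. finite D \<and> (\<forall>d\<in>D. f d \<in> P (fst d) (snd d)) \<and> x = (\<Sum>d\<in>D. f d)) \<and>
     (\<forall>D f. finite D \<and> (\<forall>d\<in>D. f d \<in> P (fst d) (snd d)) \<and> (\<Sum>d\<in>D. f d) = 0
              \<longrightarrow> (\<forall>d\<in>D. f d = 0))"

definition hdeg :: "(int \<Rightarrow> int \<Rightarrow> 'x set) \<Rightarrow> 'x \<Rightarrow> int" where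
  "hdeg P y = (SOME h. \<exists>q. y \<in> P q h)"

definition free_Z_basis :: "'x::ab_group_add set \<Rightarrow> bool" where
  "free_Z_basis X \<longleftrightarrow>
     (\<forall>x. \<exists>c. finite {y\<in>X. c y \<noteq> 0} \<and> x = (\<Sum>y\<in>{y\<in>X. c y \<noteq> 0}. zsmul (c y) y)) \<and>
     (\<forall>c F. finite F \<and> F \<subseteq> X \<and> (\<Sum>y\<in>F. zsmul (c y) y) = 0 \<longrightarrow> (\<forall>y\<in>F. c y = 0))"

text \<open>e 0, ..., e (k-1) are the images of e_1, ..., e_k: orthogonal idempotents,
  summing to 1, Z-linearly independent (so their Z-span is Z e_1 x ... x Z e_k).\<close>
definition idem_sys :: "nat \<Rightarrow> (nat \<Rightarrow> 'r::ring_1) \<Rightarrow> bool" where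
  "idem_sys k e \<longleftrightarrow>
     (\<forall>i<k. \<forall>j<k. e i * e j = (if i = j then e i else 0)) \<and> (\<Sum>i<k. e i) = 1 \<and>
     (\<forall>n::nat \<Rightarrow> int. (\<Sum>i<k. of_int (n i) * e i) = 0 \<longrightarrow> (\<forall>i<k. n i = 0))"

definition dg_bigraded_algebra ::
  "nat \<Rightarrow> (nat \<Rightarrow> 'b::ring_1) \<Rightarrow> (int \<Rightarrow> int \<Rightarrow> 'b set) \<Rightarrow> ('b \<Rightarrow> 'b) \<Rightarrow> bool" where
  "dg_bigraded_algebra k e P mu1 \<longleftrightarrow>
     bigraded P \<and> idem_sys k e \<and>
     P 0 0 = range (\<lambda>n::nat \<Rightarrow> int. \<Sum>i<k. of_int (n i) * e i) \<and>
     (\<forall>q h q' h' x y. x \<in> P q h \<longrightarrow> y \<in> P q' h' \<longrightarrow> x * y \<in> P (q + q') (h + h')) \<and>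
     (\<forall>x y. mu1 (x + y) = mu1 x + mu1 y) \<and>
     (\<forall>q h x. x \<in> P q h \<longrightarrow> mu1 x \<in> P q (h + 1)) \<and>
     (\<forall>x. mu1 (mu1 x) = 0) \<and>
     (\<forall>q h x y. y \<in> P q h \<longrightarrow> mu1 (x * y) = sgnmul h (mu1 x * y) + x * mu1 y)"

definition dg_module ::
  "nat \<Rightarrow> (nat \<Rightarrow> 'b::ring_1) \<Rightarrow> (int \<Rightarrow> int \<Rightarrow> 'b set) \<Rightarrow> ('b \<Rightarrow> 'b) \<Rightarrow>
   (int \<Rightarrow> int \<Rightarrow> 'a::ab_group_add set) \<Rightarrow> ('a \<Rightarrow> 'a) \<Rightarrow> ('a \<Rightarrow> 'b \<Rightarrow> 'a) \<Rightarrow> bool" where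
  "dg_module k e PB mu1 PA m1 m2 \<longleftrightarrow>
     bigraded PA \<and>
     (\<forall>x y b. m2 (x + y) b = m2 x b + m2 y b) \<and>
     (\<forall>x b b'. m2 x (b + b') = m2 x b + m2 x b') \<and>
     (\<forall>x. m2 x 1 = x) \<and>
     (\<forall>x b b'. m2 (m2 x b) b' = m2 x (b * b')) \<and>
     (\<forall>q h q' h' x b. x \<in> PA q h \<longrightarrow> b \<in> PB q' h' \<longrightarrow> m2 x b \<in> PA (q + q') (h + h')) \<and>
     (\<forall>x y. m1 (x + y) = m1 x + m1 y) \<and>
     (\<forall>q h x. x \<in> PA q h \<longrightarrow> m1 x \<in> PA q (h + 1)) \<and>
     (\<forall>x. m1 (m1 x) = 0) \<and>
     (\<forall>q h x b. b \<in> PB q h \<longrightarrow> m1 (m2 x b) = sgnmul h (m2 (m1 x) b) + m2 x (mu1 b)) \<and>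
     (\<exists>X. free_Z_basis X \<and> (\<forall>x\<in>X. \<exists>q h. x \<in> PA q h) \<and>
          (\<forall>x\<in>X. \<exists>!i. i < k \<and> m2 x (e i) = x))"

section \<open>A-infinity morphisms with F_n = 0 (n > 2) and homotopies with H_n = 0 (n > 1)\<close>

definition ainf_morphism2 ::
  "nat \<Rightarrow> (nat \<Rightarrow> 'b::ring_1) \<Rightarrow> (int \<Rightarrow> int \<Rightarrow> 'b set) \<Rightarrow> ('b \<Rightarrow> 'b) \<Rightarrow>
   (int \<Rightarrow> int \<Rightarrow> 'a::ab_group_add set) \<Rightarrow> ('a \<Rightarrow> 'a) \<Rightarrow> ('a \<Rightarrow> 'b \<Rightarrow> 'a) \<Rightarrow>
   (int \<Rightarrow> int \<Rightarrow> 'd::ab_group_add set) \<Rightarrow> ('d \<Rightarrow> 'd) \<Rightarrow> ('d \<Rightarrow> 'b \<Rightarrow> 'd) \<Rightarrow>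
   ('a \<Rightarrow> 'd) \<Rightarrow> ('a \<Rightarrow> 'b \<Rightarrow> 'd) \<Rightarrow> bool" where
  "ainf_morphism2 k e PB mu1 PA m1 m2 PA' m1' m2' F1 F2 \<longleftrightarrow>
     (\<forall>x y. F1 (x + y) = F1 x + F1 y) \<and>
     (\<forall>i<k. \<forall>x. F1 (m2 x (e i)) = m2' (F1 x) (e i)) \<and>
     (\<forall>q h x. x \<in> PA q h \<longrightarrow> F1 x \<in> PA' q h) \<and>
     (\<forall>x y b. F2 (x + y) b = F2 x b + F2 y b) \<and>
     (\<forall>x b b'. F2 x (b + b') = F2 x b + F2 x b') \<and>
     (\<forall>i<k. \<forall>x b. F2 (m2 x (e i)) b = F2 x (e i * b)) \<and>
     (\<forall>i<k. \<forall>x b. F2 x (b * e i) = m2' (F2 x b) (e i)) \<and>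
     (\<forall>q h q' h' x b. x \<in> PA q h \<longrightarrow> b \<in> PB q' h' \<longrightarrow> F2 x b \<in> PA' (q + q') (h + h' - 1)) \<and>
     (\<forall>x. m1' (F1 x) = F1 (m1 x)) \<and>
     (\<forall>q h x b. b \<in> PB q h \<longrightarrow>
        m1' (F2 x b) + m2' (F1 x) b = F1 (m2 x b) - F2 (m1 x) (sgnmul h b) - F2 x (mu1 b)) \<and>
     (\<forall>q h x b b'. b' \<in> PB q h \<longrightarrow>
        - m2' (F2 x b) (sgnmul h b') = F2 (m2 x b) b' - F2 x (b * b'))"

definition ainf_homotopy1 ::
  "nat \<Rightarrow> (nat \<Rightarrow> 'b::ring_1) \<Rightarrow> (int \<Rightarrow> int \<Rightarrow> 'b set) \<Rightarrow>
   (int \<Rightarrow> int \<Rightarrow> 'a::ab_group_add set) \<Rightarrow> ('a \<Rightarrow> 'a) \<Rightarrow> ('a \<Rightarrow> 'b \<Rightarrow> 'a) \<Rightarrow>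
   (int \<Rightarrow> int \<Rightarrow> 'd::ab_group_add set) \<Rightarrow> ('d \<Rightarrow> 'd) \<Rightarrow> ('d \<Rightarrow> 'b \<Rightarrow> 'd) \<Rightarrow>
   ('a \<Rightarrow> 'd) \<Rightarrow> ('a \<Rightarrow> 'b \<Rightarrow> 'd) \<Rightarrow> ('a \<Rightarrow> 'd) \<Rightarrow> ('a \<Rightarrow> 'b \<Rightarrow> 'd) \<Rightarrow> ('a \<Rightarrow> 'd) \<Rightarrow> bool" where
  "ainf_homotopy1 k e PB PA m1 m2 PA' m1' m2' F1 F2 G1 G2 H1 \<longleftrightarrow>
     (\<forall>x y. H1 (x + y) = H1 x + H1 y) \<and>
     (\<forall>i<k. \<forall>x. H1 (m2 x (e i)) = m2' (H1 x) (e i)) \<and>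
     (\<forall>q h x. x \<in> PA q h \<longrightarrow> H1 x \<in> PA' q (h - 1)) \<and>
     (\<forall>x. F1 x - G1 x = m1' (H1 x) + H1 (m1 x)) \<and>
     (\<forall>q h x b. b \<in> PB q h \<longrightarrow>
        F2 x b - G2 x b = - m2' (H1 x) (sgnmul h b) + H1 (m2 x b))"

text \<open>An element of X (x) Y is represented by a list of terms (n, x, y) meaning
  the formal sum of n * (x (x) y).\<close>
type_synonym ('x, 'y) fsum = "(int \<times> 'x \<times> 'y) list"

definition fs_val :: "('x, 'y) fsum \<Rightarrow> ('x \<times> 'y \<Rightarrow> int)" where
  "fs_val u = (\<lambda>p. sum_list (map (\<lambda>(n, x, y). if (x, y) = p then n else 0) u))"

inductive_set zspan :: "('p \<Rightarrow> int) set \<Rightarrow> ('p \<Rightarrow> int) set" for G where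
  zero: "(\<lambda>_. 0) \<in> zspan G"
| gen: "g \<in> G \<Longrightarrow> g \<in> zspan G"
| diff: "u \<in> zspan G \<Longrightarrow> v \<in> zspan G \<Longrightarrow> (\<lambda>p. u p - v p) \<in> zspan G"

text \<open>Relations defining X (x)_I Y, where rx i is the right action of e_i on X and
  ly i the left action of e_i on Y.\<close>
definition tens_rels ::
  "nat \<Rightarrow> (nat \<Rightarrow> 'x::ab_group_add \<Rightarrow> 'x) \<Rightarrow> (nat \<Rightarrow> 'y::ab_group_add \<Rightarrow> 'y) \<Rightarrow> ('x \<times> 'y \<Rightarrow> int) set" where
  "tens_rels k rx ly =
     {fs_val [(1, x + x', y), (-1, x, y), (-1, x', y)] | x x' y. True} \<union>
     {fs_val [(1, x, y + y'), (-1, x, y), (-1, x, y')] | x y y'. True} \<union>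
     {fs_val [(1, rx i x, y), (-1, x, ly i y)] | i x y. i < k}"

definition tens_eq ::
  "nat \<Rightarrow> (nat \<Rightarrow> 'x::ab_group_add \<Rightarrow> 'x) \<Rightarrow> (nat \<Rightarrow> 'y::ab_group_add \<Rightarrow> 'y) \<Rightarrow>
   ('x, 'y) fsum \<Rightarrow> ('x, 'y) fsum \<Rightarrow> bool" where
  "tens_eq k rx ly u v \<longleftrightarrow> (\<lambda>p. fs_val u p - fs_val v p) \<in> zspan (tens_rels k rx ly)"

definition fs_neg :: "('x, 'y) fsum \<Rightarrow> ('x, 'y) fsum" where
  "fs_neg u = map (\<lambda>(n, x, y). (- n, x, y)) u"

text \<open>Maps on tensors (no automatic Koszul signs; signs are written via |id|).\<close>
definition id_tens :: "('y \<Rightarrow> ('z, 'w) fsum) \<Rightarrow> ('c, 'y) fsum \<Rightarrow> ('c, 'z \<times> 'w) fsum" where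
  "id_tens g u = concat (map (\<lambda>(n, c, y). map (\<lambda>(m, z, w). (n * m, c, (z, w))) (g y)) u)"

definition mu2_tens :: "('c::times, 'c \<times> 'w) fsum \<Rightarrow> ('c, 'w) fsum" where
  "mu2_tens u = map (\<lambda>(n, c, (c', w)). (n, c * c', w)) u"

definition mu1_tens :: "('c \<Rightarrow> 'c) \<Rightarrow> (int \<Rightarrow> int \<Rightarrow> 'w set) \<Rightarrow> ('c, 'w) fsum \<Rightarrow> ('c, 'w) fsum" where
  "mu1_tens mu1 P u = map (\<lambda>(n, c, w). (n * neg1pow (hdeg P w), mu1 c, w)) u"

text \<open>delta_DD(1) = sum over s < N of a s (x) (c s)^op, homogeneous of bidegree (0,1),
  satisfying the DD structure relation in B (x)_I (B')^op.  In (B')^op the left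
  I-action is e . c^op = (c e)^op and c_t^op c_s^op = (c_s c_t)^op.\<close>
definition dd_rank_one ::
  "nat \<Rightarrow> (nat \<Rightarrow> 'b::ring_1) \<Rightarrow> (int \<Rightarrow> int \<Rightarrow> 'b set) \<Rightarrow> ('b \<Rightarrow> 'b) \<Rightarrow>
   (nat \<Rightarrow> 'c::ring_1) \<Rightarrow> (int \<Rightarrow> int \<Rightarrow> 'c set) \<Rightarrow> ('c \<Rightarrow> 'c) \<Rightarrow>
   nat \<Rightarrow> (nat \<Rightarrow> 'b) \<Rightarrow> (nat \<Rightarrow> 'c) \<Rightarrow> (nat \<Rightarrow> int) \<Rightarrow> (nat \<Rightarrow> int) \<Rightarrow> (nat \<Rightarrow> int) \<Rightarrow> (nat \<Rightarrow> int) \<Rightarrow> bool" where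
  "dd_rank_one k e PB mu1 e' PB' mu1' N a c qa ha qc hc \<longleftrightarrow>
     (\<forall>s<N. a s \<in> PB (qa s) (ha s) \<and> c s \<in> PB' (qc s) (hc s) \<and>
            qa s + qc s = 0 \<and> ha s + hc s = 1) \<and>
     tens_eq k (\<lambda>i x. x * e i) (\<lambda>i y. y * e' i)
       (concat (map (\<lambda>s. [(neg1pow (hc s), mu1 (a s), c s), (1, a s, mu1' (c s))]) [0..<N]) @
        concat (map (\<lambda>s. map (\<lambda>t. (neg1pow (ha t * hc s), a s * a t, c s * c t)) [0..<N]) [0..<N]))
       []"

text \<open>Type D structure map of A box DD (a map A -> B' (x)_I A), on homogeneous x.\<close>
definition box_delta ::
  "(int \<Rightarrow> int \<Rightarrow> 'a set) \<Rightarrow> ('a \<Rightarrow> 'a) \<Rightarrow> ('a \<Rightarrow> 'b \<Rightarrow> 'a) \<Rightarrow>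
   nat \<Rightarrow> (nat \<Rightarrow> 'b) \<Rightarrow> (nat \<Rightarrow> 'c::one) \<Rightarrow> (nat \<Rightarrow> int) \<Rightarrow> 'a \<Rightarrow> ('c, 'a) fsum" where
  "box_delta PA m1 m2 N a c hc x =
     (1, 1, m1 x) # map (\<lambda>s. (neg1pow (hdeg PA (m2 x (a s)) * hc s), c s, m2 x (a s))) [0..<N]"

definition box_morph ::
  "(int \<Rightarrow> int \<Rightarrow> 'd set) \<Rightarrow> ('a \<Rightarrow> 'd) \<Rightarrow> ('a \<Rightarrow> 'b \<Rightarrow> 'd) \<Rightarrow>
   nat \<Rightarrow> (nat \<Rightarrow> 'b) \<Rightarrow> (nat \<Rightarrow> 'c::one) \<Rightarrow> (nat \<Rightarrow> int) \<Rightarrow> 'a \<Rightarrow> ('c, 'd) fsum" where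
  "box_morph PA' F1 F2 N a c hc x =
     (1, 1, F1 x) # map (\<lambda>s. (neg1pow (hc s * (1 + hdeg PA' (F2 x (a s)))), c s, F2 x (a s))) [0..<N]"

definition box_htpy :: "('a \<Rightarrow> 'd) \<Rightarrow> 'a \<Rightarrow> ('c::one, 'd) fsum" where
  "box_htpy H1 x = [(1, 1, H1 x)]"

end

theory Submission
  imports Defs
begin

definition dl :: "'x \<Rightarrow> 'y \<Rightarrow> ('x \<times> 'y \<Rightarrow> int)" where
  "dl x y = (\<lambda>p. if (x, y) = p then 1 else 0)"

lemma zs_add: "u \<in> zspan G \<Longrightarrow> v \<in> zspan G \<Longrightarrow> (\<lambda>p. u p + v p) \<in> zspan G"
proof -
  assume "u \<in> zspan G" "v \<in> zspan G"
  then have "(\<lambda>p. u p - (\<lambda>p. (\<lambda>_. 0) p - v p) p) \<in> zspan G"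
    by (intro zspan.diff zspan.zero)
  then show ?thesis by simp
qed

lemma zs_neg: "u \<in> zspan G \<Longrightarrow> (\<lambda>p. - u p) \<in> zspan G"
proof -
  assume "u \<in> zspan G"
  then have "(\<lambda>p. (\<lambda>_. 0) p - u p) \<in> zspan G" by (intro zspan.diff zspan.zero)
  then show ?thesis by simp
qed

lemma zs_diff: "u \<in> zspan G \<Longrightarrow> v \<in> zspan G \<Longrightarrow> (\<lambda>p. u p - v p) \<in> zspan G"
  by (rule zspan.diff)

lemma zs_cong: "u \<in> zspan G \<Longrightarrow> (\<And>p. u p = v p) \<Longrightarrow> v \<in> zspan G"
proof -
  assume "u \<in> zspan G" "\<And>p. u p = v p"
  then have "u = v" by auto
  with \<open>u \<in> zspan G\<close> show ?thesis by simp
qed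

lemma zs_smul_nat: "u \<in> zspan G \<Longrightarrow> (\<lambda>p. int n * u p) \<in> zspan G"
proof (induction n)
  case 0
  then show ?case using zspan.zero by simp
next
  case (Suc n)
  then have "(\<lambda>p. u p + int n * u p) \<in> zspan G" by (intro zs_add) auto
  then show ?case by (simp add: algebra_simps)
qed

lemma zs_smul: "u \<in> zspan G \<Longrightarrow> (\<lambda>p. (n::int) * u p) \<in> zspan G"
proof (cases "n \<ge> 0")
  case True
  assume u: "u \<in> zspan G"
  from zs_smul_nat[OF u, of "nat n"] True show ?thesis by simp
next
  case False
  assume u: "u \<in> zspan G"
  from zs_neg[OF zs_smul_nat[OF u, of "nat (-n)"]] False show ?thesis by simp
qed

lemma zs_lin: "u \<in> zspan G \<Longrightarrow> v \<in> zspan G \<Longrightarrow> (\<lambda>p. u p + (a::int) * v p) \<in> zspan G"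
  by (intro zs_add zs_smul)

lemma zs_sum: "finite S \<Longrightarrow> (\<And>s. s \<in> S \<Longrightarrow> f s \<in> zspan G) \<Longrightarrow> (\<lambda>p. \<Sum>s\<in>S. f s p) \<in> zspan G"
proof (induction S rule: finite_induct)
  case empty
  then show ?case using zspan.zero by simp
next
  case (insert x F)
  then have "(\<lambda>p. f x p + (\<Sum>s\<in>F. f s p)) \<in> zspan G" by (intro zs_add) auto
  then show ?case using insert by simp
qed

lemma fs_val_alt: "fs_val u p = sum_list (map (\<lambda>(n, x, y). n * dl x y p) u)"
  unfolding fs_val_def dl_def by (induction u) auto

lemma fs_val_append: "fs_val (u @ v) p = fs_val u p + fs_val v p"
  by (simp add: fs_val_alt)

lemma fs_val_neg: "fs_val (fs_neg u) p = - fs_val u p"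
  unfolding fs_neg_def fs_val_alt by (induction u) auto

lemma R1: "(\<lambda>p. dl (x + x') y p - dl x y p - dl x' y p) \<in> zspan (tens_rels k rx ly)"
proof -
  have "fs_val [(1, x + x', y), (-1, x, y), (-1, x', y)] \<in> zspan (tens_rels k rx ly)"
    unfolding tens_rels_def by (rule zspan.gen) blast
  then show ?thesis by (rule zs_cong) (simp add: fs_val_alt)
qed

lemma R2: "(\<lambda>p. dl x (y + y') p - dl x y p - dl x y' p) \<in> zspan (tens_rels k rx ly)"
proof -
  have "fs_val [(1, x, y + y'), (-1, x, y), (-1, x, y')] \<in> zspan (tens_rels k rx ly)"
    unfolding tens_rels_def by (rule zspan.gen) blast
  then show ?thesis by (rule zs_cong) (simp add: fs_val_alt)
qed

lemma Z0r: "dl x 0 \<in> zspan (tens_rels k rx ly)"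
proof -
  from zs_neg[OF R2[of x 0 0 k rx ly]] show ?thesis by (rule zs_cong) simp
qed

lemma Z0l: "dl 0 y \<in> zspan (tens_rels k rx ly)"
proof -
  from zs_neg[OF R1[of 0 0 y k rx ly]] show ?thesis by (rule zs_cong) simp
qed

lemma Rneg: "(\<lambda>p. dl x (- y) p + dl x y p) \<in> zspan (tens_rels k rx ly)"
proof -
  have "(\<lambda>p. dl x 0 p - (dl x (-y + y) p - dl x (-y) p - dl x y p)) \<in> zspan (tens_rels k rx ly)"
    by (intro zs_diff Z0r R2)
  then show ?thesis by (rule zs_cong) simp
qed

lemma Rsum: "(\<lambda>p. dl x (sum_list ys) p - sum_list (map (\<lambda>y. dl x y p) ys)) \<in> zspan (tens_rels k rx ly)"
proof (induction ys)
  case Nil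
  then show ?case using Z0r[of x k rx ly] by (rule_tac zs_cong) auto
next
  case (Cons y ys)
  have "(\<lambda>p. (dl x (y + sum_list ys) p - dl x y p - dl x (sum_list ys) p) +
      (dl x (sum_list ys) p - sum_list (map (\<lambda>y. dl x y p) ys))) \<in> zspan (tens_rels k rx ly)"
    by (intro zs_add R2 Cons)
  then show ?case by (rule zs_cong) simp
qed

lemma Rzero: "sum_list ys = 0 \<Longrightarrow> (\<lambda>p. sum_list (map (\<lambda>y. dl x y p) ys)) \<in> zspan (tens_rels k rx ly)"
proof -
  assume "sum_list ys = 0"
  then have "(\<lambda>p. dl x 0 p - (dl x (sum_list ys) p - sum_list (map (\<lambda>y. dl x y p) ys))) \<in> zspan (tens_rels k rx ly)"
    by (intro zs_diff Z0r Rsum)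
  then show ?thesis by (rule zs_cong) (simp add: \<open>sum_list ys = 0\<close>)
qed

lemma Rchoice: "y = 0 \<or> n = n' \<Longrightarrow> (\<lambda>p. n * dl x y p - n' * dl x y p) \<in> zspan (tens_rels k rx ly)"
proof -
  assume h: "y = 0 \<or> n = n'"
  show ?thesis
  proof (cases "y = 0")
    case True
    then show ?thesis by (simp add: zs_diff zs_smul Z0r)
  next
    case False
    with h have "n = n'" by simp
    then show ?thesis using zspan.zero by simp
  qed
qed

lemma neg1pow_add: "neg1pow (a + b) = neg1pow a * neg1pow b"
  unfolding neg1pow_def by auto

lemma neg1pow_shift: "neg1pow ((h - 1 + a) * c) = neg1pow (c * (h + a)) * neg1pow c"
proof -
  have "(h - 1 + a) * c = (c * (h + a) + c) + (-2) * c" by algebra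
  moreover have "neg1pow ((-2) * c) = 1" unfolding neg1pow_def by simp
  ultimately show ?thesis by (simp only: neg1pow_add mult_1_right)
qed

lemma step_s:
  assumes S: "y1 + (- y2) + (- y3) + (- sgnmul hc y4) = 0"
    and c1: "y1 = 0 \<or> n1 = \<epsilon>" and c2: "y2 = 0 \<or> n2 = \<epsilon>" and c3: "y3 = 0 \<or> n3 = \<epsilon>"
    and c4: "y4 = 0 \<or> n4 = \<epsilon> * neg1pow hc"
  shows "(\<lambda>p. n1 * dl x y1 p - n2 * dl x y2 p - n3 * dl x y3 p - n4 * dl x y4 p)
     \<in> zspan (tens_rels k rx ly)"
proof -
  have W4: "(\<lambda>p. dl x (- sgnmul hc y4) p + neg1pow hc * dl x y4 p) \<in> zspan (tens_rels k rx ly)"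
  proof (cases "even hc")
    case True
    then show ?thesis using Rneg[of x y4 k rx ly] by (simp add: sgnmul_def neg1pow_def)
  next
    case False
    then show ?thesis using zspan.zero by (simp add: sgnmul_def neg1pow_def)
  qed
  have C1: "(\<lambda>p. n1 * dl x y1 p - \<epsilon> * dl x y1 p) \<in> zspan (tens_rels k rx ly)" by (rule Rchoice[OF c1])
  have C2: "(\<lambda>p. n2 * dl x y2 p - \<epsilon> * dl x y2 p) \<in> zspan (tens_rels k rx ly)" by (rule Rchoice[OF c2])
  have C3: "(\<lambda>p. n3 * dl x y3 p - \<epsilon> * dl x y3 p) \<in> zspan (tens_rels k rx ly)" by (rule Rchoice[OF c3])
  have C4: "(\<lambda>p. n4 * dl x y4 p - (\<epsilon> * neg1pow hc) * dl x y4 p) \<in> zspan (tens_rels k rx ly)" by (rule Rchoice[OF c4])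
  have Sm: "(\<lambda>p. sum_list (map (\<lambda>y. dl x y p) [y1, - y2, - y3, - sgnmul hc y4])) \<in> zspan (tens_rels k rx ly)"
    by (rule Rzero) (use S in \<open>simp only: sum_list.Cons sum_list.Nil add_0_right add.assoc\<close>)
  have N2: "(\<lambda>p. dl x (- y2) p + dl x y2 p) \<in> zspan (tens_rels k rx ly)" by (rule Rneg)
  have N3: "(\<lambda>p. dl x (- y3) p + dl x y3 p) \<in> zspan (tens_rels k rx ly)" by (rule Rneg)
  note L = zs_lin[where G="tens_rels k rx ly"]
  have "(\<lambda>p. (n1 * dl x y1 p - \<epsilon> * dl x y1 p) + (-1) * (n2 * dl x y2 p - \<epsilon> * dl x y2 p)
       + (-1) * (n3 * dl x y3 p - \<epsilon> * dl x y3 p) + (-1) * (n4 * dl x y4 p - (\<epsilon> * neg1pow hc) * dl x y4 p)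
       + \<epsilon> * sum_list (map (\<lambda>y. dl x y p) [y1, - y2, - y3, - sgnmul hc y4])
       + (- \<epsilon>) * (dl x (- y2) p + dl x y2 p) + (- \<epsilon>) * (dl x (- y3) p + dl x y3 p)
       + (- \<epsilon>) * (dl x (- sgnmul hc y4) p + neg1pow hc * dl x y4 p)) \<in> zspan (tens_rels k rx ly)"
    by (rule L[OF L[OF L[OF L[OF L[OF L[OF L[OF C1 C2] C3] C4] Sm] N2] N3] W4])
  then show ?thesis by (rule zs_cong) (simp add: algebra_simps)
qed

lemma hdeg_unique:
  assumes P: "bigraded P" and y: "y \<in> P q h" and nz: "y \<noteq> 0"
  shows "hdeg P y = h"
proof -
  have "\<exists>h' q'. y \<in> P q' h'" using y by blast
  then have "\<exists>q'. y \<in> P q' (hdeg P y)" unfolding hdeg_def by (rule someI_ex)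
  then obtain q' where y': "y \<in> P q' (hdeg P y)" by blast
  show ?thesis
  proof (rule ccontr)
    assume ne: "hdeg P y \<noteq> h"
    define D where "D = {(q, h), (q', hdeg P y)}"
    define f where "f = (\<lambda>d. if d = (q, h) then y else - y)"
    have P1: "\<forall>q h. 0 \<in> P q h \<and> (\<forall>x\<in>P q h. \<forall>y\<in>P q h. x + y \<in> P q h \<and> - x \<in> P q h)"
      using P unfolding bigraded_def by (rule conjunct1)
    have cl: "- y \<in> P q' (hdeg P y)" using P1 y' by blast
    have ne2: "(q', hdeg P y) \<noteq> (q, h)" using ne by simp
    have fin: "finite D" unfolding D_def by simp
    have s0: "(\<Sum>d\<in>D. f d) = 0" unfolding D_def f_def using ne2 by (subst sum.insert) auto
    have mem: "\<forall>d\<in>D. f d \<in> P (fst d) (snd d)" using ne2 y cl unfolding D_def f_def by auto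
    have "\<forall>D f. finite D \<and> (\<forall>d\<in>D. f d \<in> P (fst d) (snd d)) \<and> (\<Sum>d\<in>D. f d) = 0
              \<longrightarrow> (\<forall>d\<in>D. f d = 0)" using P unfolding bigraded_def by (rule conjunct2[THEN conjunct2])
    then have "\<forall>d\<in>D. f d = 0" using fin s0 mem by blast
    then have "f (q, h) = 0" unfolding D_def by simp
    then show False using nz unfolding f_def by simp
  qed
qed

lemma mu2_id_aux: "mu2_tens (map (\<lambda>(m, z', w). (1 * m, (1::'c::ring_1), (z', w))) l) = l"
  unfolding mu2_tens_def by (induction l) auto

lemma mu2_id_single: "mu2_tens (id_tens g [(1, (1::'c::ring_1), z)]) = g z"
proof -
  have "id_tens g [(1, (1::'c), z)] = map (\<lambda>(m, z', w). (1 * m, (1::'c::ring_1), (z', w))) (g z)"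
    unfolding id_tens_def by simp
  then show ?thesis using mu2_id_aux by simp
qed

lemma mu2_htpy: "mu2_tens (id_tens (box_htpy H1) u) = map (\<lambda>(n, c, y). (n, (c::'c::ring_1), H1 y)) u"
  unfolding mu2_tens_def id_tens_def box_htpy_def by (induction u) auto

lemma fs_val_Cons: "fs_val ((n, x, y) # u) p = n * dl x y p + fs_val u p"
  by (simp add: fs_val_alt)

lemma fs_val_Nil: "fs_val [] p = 0"
  by (simp add: fs_val_alt)

lemma fv_map_upt: "fs_val (map f [0..<N]) p = (\<Sum>s\<in>{0..<N}. (case f s of (n, x, y) \<Rightarrow> n * dl x y p))"
  unfolding fs_val_alt by (simp add: interv_sum_list_conv_sum_set_nat o_def)

theorem proposition6p52:
  fixes k N :: nat
    and e :: "nat \<Rightarrow> 'b::ring_1" and PB :: "int \<Rightarrow> int \<Rightarrow> 'b set" and mu1 :: "'b \<Rightarrow> 'b"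
    and e' :: "nat \<Rightarrow> 'c::ring_1" and PB' :: "int \<Rightarrow> int \<Rightarrow> 'c set" and mu1' :: "'c \<Rightarrow> 'c"
    and PA :: "int \<Rightarrow> int \<Rightarrow> 'a::ab_group_add set" and m1 :: "'a \<Rightarrow> 'a" and m2 :: "'a \<Rightarrow> 'b \<Rightarrow> 'a"
    and PA' :: "int \<Rightarrow> int \<Rightarrow> 'd::ab_group_add set" and m1' :: "'d \<Rightarrow> 'd" and m2' :: "'d \<Rightarrow> 'b \<Rightarrow> 'd"
    and a :: "nat \<Rightarrow> 'b" and c :: "nat \<Rightarrow> 'c" and qa ha qc hc :: "nat \<Rightarrow> int"
    and F1 G1 H1 :: "'a \<Rightarrow> 'd" and F2 G2 :: "'a \<Rightarrow> 'b \<Rightarrow> 'd"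
  assumes B: "dg_bigraded_algebra k e PB mu1"
    and B': "dg_bigraded_algebra k e' PB' mu1'"
    and A: "dg_module k e PB mu1 PA m1 m2"
    and A': "dg_module k e PB mu1 PA' m1' m2'"
    and DD: "dd_rank_one k e PB mu1 e' PB' mu1' N a c qa ha qc hc"
    and F: "ainf_morphism2 k e PB mu1 PA m1 m2 PA' m1' m2' F1 F2"
    and G: "ainf_morphism2 k e PB mu1 PA m1 m2 PA' m1' m2' G1 G2"
    and H: "ainf_homotopy1 k e PB PA m1 m2 PA' m1' m2' F1 F2 G1 G2 H1"
  shows "\<forall>q h x. x \<in> PA q h \<longrightarrow>
    tens_eq k (\<lambda>i y. y * e' i) (\<lambda>i z. m2' z (e i))
      (box_morph PA' F1 F2 N a c hc x @ fs_neg (box_morph PA' G1 G2 N a c hc x))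
      (mu2_tens (id_tens (box_htpy H1) (box_delta PA m1 m2 N a c hc x)) @
       mu2_tens (id_tens (box_delta PA' m1' m2' N a c hc) (box_htpy H1 x)) @
       mu1_tens mu1' PA' (box_htpy H1 x))"
proof (intro allI impI)
  fix q h x
  assume x: "x \<in> PA q h"
  let ?Z = "zspan (tens_rels k (\<lambda>i y. y * e' i) (\<lambda>i z. m2' z (e i)))"
  have PAbg: "bigraded PA" using A unfolding dg_module_def by (elim conjE) assumption
  have PA'bg: "bigraded PA'" using A' unfolding dg_module_def by (elim conjE) assumption
  have m2deg: "\<forall>q h q' h' x b. x \<in> PA q h \<longrightarrow> b \<in> PB q' h' \<longrightarrow> m2 x b \<in> PA (q + q') (h + h')"
    using A unfolding dg_module_def by (elim conjE) assumption
  have m2'deg: "\<forall>q h q' h' x b. x \<in> PA' q h \<longrightarrow> b \<in> PB q' h' \<longrightarrow> m2' x b \<in> PA' (q + q') (h + h')"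
    using A' unfolding dg_module_def by (elim conjE) assumption
  have m2'add: "\<forall>x b b'. m2' x (b + b') = m2' x b + m2' x b'"
    using A' unfolding dg_module_def by (elim conjE) assumption
  have F2deg: "\<forall>q h q' h' x b. x \<in> PA q h \<longrightarrow> b \<in> PB q' h' \<longrightarrow> F2 x b \<in> PA' (q + q') (h + h' - 1)"
    using F unfolding ainf_morphism2_def by (elim conjE) assumption
  have G2deg: "\<forall>q h q' h' x b. x \<in> PA q h \<longrightarrow> b \<in> PB q' h' \<longrightarrow> G2 x b \<in> PA' (q + q') (h + h' - 1)"
    using G unfolding ainf_morphism2_def by (elim conjE) assumption
  have H1add: "\<forall>x y. H1 (x + y) = H1 x + H1 y"
    using H unfolding ainf_homotopy1_def by (elim conjE) assumption
  have H1deg: "\<forall>q h x. x \<in> PA q h \<longrightarrow> H1 x \<in> PA' q (h - 1)"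
    using H unfolding ainf_homotopy1_def by (elim conjE) assumption
  have H1rel: "\<forall>x. F1 x - G1 x = m1' (H1 x) + H1 (m1 x)"
    using H unfolding ainf_homotopy1_def by (elim conjE) assumption
  have H2rel: "\<forall>q h x b. b \<in> PB q h \<longrightarrow> F2 x b - G2 x b = - m2' (H1 x) (sgnmul h b) + H1 (m2 x b)"
    using H unfolding ainf_homotopy1_def by (elim conjE) assumption
  have DDs: "\<forall>s<N. a s \<in> PB (qa s) (ha s) \<and> c s \<in> PB' (qc s) (hc s) \<and> qa s + qc s = 0 \<and> ha s + hc s = 1"
    using DD unfolding dd_rank_one_def by (elim conjE) assumption
  have H10: "H1 0 = 0"
  proof -
    have "H1 (0 + 0) = H1 0 + H1 0" using H1add by blast
    then show ?thesis by simp
  qed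
  have m2'neg: "\<And>z b. m2' z (- b) = - m2' z b"
  proof -
    fix z b
    have "m2' z (b + - b) = m2' z b + m2' z (- b)" using m2'add by blast
    moreover have "m2' z 0 = 0"
    proof -
      have "m2' z (0 + 0) = m2' z 0 + m2' z 0" using m2'add by blast
      then show ?thesis by simp
    qed
    ultimately show "m2' z (- b) = - m2' z b" by (simp add: eq_neg_iff_add_eq_0 add.commute)
  qed
  have mu10: "mu1' 1 = 0"
  proof -
    have r: "PB' 0 0 = range (\<lambda>n::nat \<Rightarrow> int. \<Sum>i<k. of_int (n i) * e' i)"
      using B' unfolding dg_bigraded_algebra_def by (elim conjE) assumption
    have id: "idem_sys k e'" using B' unfolding dg_bigraded_algebra_def by (elim conjE) assumption
    have "(\<Sum>i<k. e' i) = 1" using id unfolding idem_sys_def by (elim conjE) assumption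
    then have "(\<Sum>i<k. of_int ((\<lambda>_. 1::int) i) * e' i) = 1" by simp
    then have one: "1 \<in> PB' 0 0" unfolding r by (intro range_eqI[where x="\<lambda>_. 1"]) simp
    have lb: "\<forall>q h x y. y \<in> PB' q h \<longrightarrow> mu1' (x * y) = sgnmul h (mu1' x * y) + x * mu1' y"
      using B' unfolding dg_bigraded_algebra_def by (elim conjE) assumption
    have "mu1' (1 * 1) = sgnmul 0 (mu1' 1 * 1) + 1 * mu1' 1" using lb one by blast
    then show ?thesis by (simp add: sgnmul_def)
  qed
  define nF where "nF s = neg1pow (hc s * (1 + hdeg PA' (F2 x (a s))))" for s
  define nG where "nG s = neg1pow (hc s * (1 + hdeg PA' (G2 x (a s))))" for s
  define sg where "sg s = neg1pow (hdeg PA (m2 x (a s)) * hc s)" for s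
  define sg' where "sg' s = neg1pow (hdeg PA' (m2' (H1 x) (a s)) * hc s)" for s
  define nm where "nm = neg1pow (hdeg PA' (H1 x))"
  define T1 where "T1 p = dl (1::'c) (F1 x) p - dl 1 (G1 x) p - dl 1 (H1 (m1 x)) p - dl 1 (m1' (H1 x)) p
      - nm * dl (0::'c) (H1 x) p" for p
  define T where "T s p = nF s * dl (c s) (F2 x (a s)) p - nG s * dl (c s) (G2 x (a s)) p
      - sg s * dl (c s) (H1 (m2 x (a s))) p - sg' s * dl (c s) (m2' (H1 x) (a s)) p" for s p
  have formula: "fs_val (box_morph PA' F1 F2 N a c hc x @ fs_neg (box_morph PA' G1 G2 N a c hc x)) p -
      fs_val (mu2_tens (id_tens (box_htpy H1) (box_delta PA m1 m2 N a c hc x)) @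
       mu2_tens (id_tens (box_delta PA' m1' m2' N a c hc) (box_htpy H1 x)) @
       mu1_tens mu1' PA' (box_htpy H1 x)) p = T1 p + (\<Sum>s\<in>{0..<N}. T s p)" for p
  proof -
    have L1: "fs_val (box_morph PA' F1 F2 N a c hc x) p = dl (1::'c) (F1 x) p + (\<Sum>s\<in>{0..<N}. nF s * dl (c s) (F2 x (a s)) p)"
      unfolding box_morph_def nF_def by (simp add: fs_val_Cons fv_map_upt)
    have L2: "fs_val (box_morph PA' G1 G2 N a c hc x) p = dl (1::'c) (G1 x) p + (\<Sum>s\<in>{0..<N}. nG s * dl (c s) (G2 x (a s)) p)"
      unfolding box_morph_def nG_def by (simp add: fs_val_Cons fv_map_upt)
    have R1: "fs_val (mu2_tens (id_tens (box_htpy H1) (box_delta PA m1 m2 N a c hc x))) p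
        = dl (1::'c) (H1 (m1 x)) p + (\<Sum>s\<in>{0..<N}. sg s * dl (c s) (H1 (m2 x (a s))) p)"
      unfolding mu2_htpy box_delta_def sg_def by (simp add: fs_val_Cons fv_map_upt)
    have R2: "fs_val (mu2_tens (id_tens (box_delta PA' m1' m2' N a c hc) (box_htpy H1 x))) p
        = dl (1::'c) (m1' (H1 x)) p + (\<Sum>s\<in>{0..<N}. sg' s * dl (c s) (m2' (H1 x) (a s)) p)"
      unfolding box_htpy_def mu2_id_single box_delta_def sg'_def by (simp add: fs_val_Cons fv_map_upt)
    have R3: "fs_val (mu1_tens mu1' PA' (box_htpy H1 x :: ('c, 'd) fsum)) p = nm * dl (0::'c) (H1 x) p"
      unfolding box_htpy_def mu1_tens_def nm_def by (simp add: fs_val_Cons fs_val_Nil mu10)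
    show ?thesis
      unfolding fs_val_append fs_val_neg L1 L2 R1 R2 R3 T1_def T_def
      by (simp add: sum_subtractf sum.distrib algebra_simps)
  qed
  have T1Z: "T1 \<in> ?Z"
  proof -
    have d: "F1 x = (m1' (H1 x) + H1 (m1 x)) + G1 x" using H1rel by (metis diff_eq_eq)
    have e1: "sum_list [G1 x, m1' (H1 x), H1 (m1 x)] = F1 x" by (simp add: d ac_simps)
    have "(\<lambda>p. (dl (1::'c) (sum_list [G1 x, m1' (H1 x), H1 (m1 x)]) p
          - sum_list (map (\<lambda>y. dl (1::'c) y p) [G1 x, m1' (H1 x), H1 (m1 x)])) + (- nm) * dl (0::'c) (H1 x) p) \<in> ?Z"
      by (rule zs_lin[OF Rsum Z0l])
    then show ?thesis unfolding e1 by (rule zs_cong) (simp add: T1_def)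
  qed
  have TZ: "T s \<in> ?Z" if s: "s < N" for s
  proof -
    have as: "a s \<in> PB (qa s) (ha s)" and hh: "ha s + hc s = 1" using DDs s by auto
    define \<epsilon> where "\<epsilon> = neg1pow (hc s * (h + ha s))"
    have F2m: "F2 x (a s) \<in> PA' (q + qa s) (h + ha s - 1)" using F2deg x as by blast
    have G2m: "G2 x (a s) \<in> PA' (q + qa s) (h + ha s - 1)" using G2deg x as by blast
    have m2m: "m2 x (a s) \<in> PA (q + qa s) (h + ha s)" using m2deg x as by blast
    have Hm: "H1 x \<in> PA' q (h - 1)" using H1deg x by blast
    have Mm: "m2' (H1 x) (a s) \<in> PA' (q + qa s) (h - 1 + ha s)" using m2'deg Hm as by blast
    have rel: "F2 x (a s) - G2 x (a s) = - m2' (H1 x) (sgnmul (ha s) (a s)) + H1 (m2 x (a s))"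
      using H2rel as by blast
    have sgm: "m2' (H1 x) (sgnmul (ha s) (a s)) = - sgnmul (hc s) (m2' (H1 x) (a s))"
    proof -
      have "even (ha s) \<longleftrightarrow> odd (hc s)" using hh
        by (metis add_diff_cancel_right' even_add odd_one)
      then show ?thesis unfolding sgnmul_def by (auto simp: m2'neg)
    qed
    have d1: "F2 x (a s) = (sgnmul (hc s) (m2' (H1 x) (a s)) + H1 (m2 x (a s))) + G2 x (a s)"
      using rel unfolding sgm by (simp add: diff_eq_eq)
    have S: "F2 x (a s) + - G2 x (a s) + - H1 (m2 x (a s)) + - sgnmul (hc s) (m2' (H1 x) (a s)) = 0"
      unfolding d1 by (simp add: algebra_simps)
    have c1: "F2 x (a s) = 0 \<or> nF s = \<epsilon>"
    proof (cases "F2 x (a s) = 0")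
      case False
      then have "hdeg PA' (F2 x (a s)) = h + ha s - 1" by (rule hdeg_unique[OF PA'bg F2m])
      then show ?thesis by (simp add: nF_def \<epsilon>_def)
    qed simp
    have c2: "G2 x (a s) = 0 \<or> nG s = \<epsilon>"
    proof (cases "G2 x (a s) = 0")
      case False
      then have "hdeg PA' (G2 x (a s)) = h + ha s - 1" by (rule hdeg_unique[OF PA'bg G2m])
      then show ?thesis by (simp add: nG_def \<epsilon>_def)
    qed simp
    have c3: "H1 (m2 x (a s)) = 0 \<or> sg s = \<epsilon>"
    proof (cases "m2 x (a s) = 0")
      case True
      then show ?thesis by (simp add: H10)
    next
      case False
      then have "hdeg PA (m2 x (a s)) = h + ha s" by (rule hdeg_unique[OF PAbg m2m])
      then show ?thesis by (simp add: sg_def \<epsilon>_def mult.commute)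
    qed
    have c4: "m2' (H1 x) (a s) = 0 \<or> sg' s = \<epsilon> * neg1pow (hc s)"
    proof (cases "m2' (H1 x) (a s) = 0")
      case False
      then have "hdeg PA' (m2' (H1 x) (a s)) = h - 1 + ha s" by (rule hdeg_unique[OF PA'bg Mm])
      then show ?thesis by (simp add: sg'_def \<epsilon>_def neg1pow_shift)
    qed simp
    have "(\<lambda>p. nF s * dl (c s) (F2 x (a s)) p - nG s * dl (c s) (G2 x (a s)) p
      - sg s * dl (c s) (H1 (m2 x (a s))) p - sg' s * dl (c s) (m2' (H1 x) (a s)) p) \<in> ?Z"
      by (rule step_s[OF S c1 c2 c3 c4])
    then show ?thesis by (rule zs_cong) (simp add: T_def)
  qed
  have "(\<lambda>p. T1 p + (\<Sum>s\<in>{0..<N}. T s p)) \<in> ?Z"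
    by (intro zs_add[OF T1Z] zs_sum) (auto intro: TZ)
  then show "tens_eq k (\<lambda>i y. y * e' i) (\<lambda>i z. m2' z (e i))
      (box_morph PA' F1 F2 N a c hc x @ fs_neg (box_morph PA' G1 G2 N a c hc x))
      (mu2_tens (id_tens (box_htpy H1) (box_delta PA m1 m2 N a c hc x)) @
       mu2_tens (id_tens (box_delta PA' m1' m2' N a c hc) (box_htpy H1 x)) @
       mu1_tens mu1' PA' (box_htpy H1 x))"
    unfolding tens_eq_def by (rule zs_cong) (simp only: formula)
qed

end
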